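(* Let $X$ be a Banach space and $(x_n^* )_{n\ge1}$ a sequence in $X^*$ which does not converge to $0$ in the weak topology $\sigma(X^*,X^{**})$. Then there exist a subsequence $(x^*_{n_k})_{k\ge1}$ and $\delta>0$ such that for every finite set $F\subseteq\mathbb N$ there exists $x_F\in X$ with $\|x_F\|_X=1$ and $|\langle x_F,x^*_{n_k}\rangle|\ge\delta$ for all $k\in F$. Moreover, if $X=E$ is a Banach lattice and $x_n^*\ge0$ for all $n$, then $x_F$ may be chosen with $x_F\ge 0$. *)

theory Defs
  imports "HOL-Analysis.Analysis"
begin

class banach_lattice = banach + ordered_real_vector + lattice +
  assumes lattice_norm: "sup x (- x) \<le> sup y (- y) \<Longrightarrow> norm x \<le> norm y"

definition weakly_null :: "(nat \<Rightarrow> ('a::real_normed_vector \<Rightarrow>\<^sub>L real)) \<Rightarrow> bool" where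
  "weakly_null xs \<longleftrightarrow>
     (\<forall>\<phi> :: ('a \<Rightarrow>\<^sub>L real) \<Rightarrow>\<^sub>L real. (\<lambda>n. blinfun_apply \<phi> (xs n)) \<longlonglongrightarrow> 0)"

definition positive_functional :: "('a::{real_normed_vector,order} \<Rightarrow>\<^sub>L real) \<Rightarrow> bool" where
  "positive_functional f \<longleftrightarrow> (\<forall>x. 0 \<le> x \<longrightarrow> 0 \<le> blinfun_apply f x)"

end

theory Submission
  imports Defs
begin

lemma coef_nonneg:
  fixes a1 a2 b c :: real
  assumes "\<And>s. s \<ge> 0 \<Longrightarrow> a1 * (c + s) + a2 * c \<ge> b"
  shows "a1 \<ge> 0"
proof (rule ccontr)
  assume "\<not> a1 \<ge> 0"
  hence a: "a1 < 0" by simp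
  define s where "s = max 0 ((a1 * c + a2 * c - b + 1) / (- a1))"
  have s0: "s \<ge> 0" unfolding s_def by simp
  have "s \<ge> (a1 * c + a2 * c - b + 1) / (- a1)" unfolding s_def by simp
  moreover have "(a1 * c + a2 * c - b + 1) = ((a1 * c + a2 * c - b + 1) / (- a1)) * (- a1)" using a by simp
  ultimately have "s * (- a1) \<ge> a1 * c + a2 * c - b + 1" using a
    by (metis mult_right_mono neg_0_le_iff_le less_le)
  hence "a1 * (c + s) + a2 * c < b" by (simp add: algebra_simps)
  with assms[OF s0] show False by simp
qed

lemma two_minimax:
  fixes C :: "'a::real_vector set" and h g :: "'a \<Rightarrow> real" and m \<eta> :: real
  assumes "convex C" "linear h" "linear g"
    and H: "\<And>t \<eta>. 0 \<le> t \<Longrightarrow> t \<le> 1 \<Longrightarrow> \<eta> > 0 \<Longrightarrow> \<exists>x\<in>C. t * h x + (1 - t) * g x \<ge> m - \<eta>"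
    and "\<eta> > 0"
  shows "\<exists>x\<in>C. h x \<ge> m - \<eta> \<and> g x \<ge> m - \<eta>"
proof (rule ccontr)
  assume N: "\<not> ?thesis"
  define A where "A = (\<lambda>x. (h x, g x)) ` C"
  define Q where "Q = {m - \<eta>..} \<times> {m - \<eta>..}"
  have lin: "linear (\<lambda>x. (h x, g x))" using assms(2,3) by (intro linearI) (simp_all add: linear_add linear_scale)
  have cA: "convex A" unfolding A_def by (rule convex_linear_image[OF lin assms(1)])
  have cQ: "convex Q" unfolding Q_def by (intro convex_Times) (simp_all add: convex_real_interval)
  obtain x0 where "x0 \<in> C" using H[of 0 1] by auto
  hence nA: "A \<noteq> {}" unfolding A_def by auto
  have nQ: "Q \<noteq> {}" unfolding Q_def by auto
  have dj: "A \<inter> Q = {}" using N unfolding A_def Q_def by auto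
  obtain a b where a: "a \<noteq> 0" and aA: "\<forall>p\<in>A. inner a p \<le> b" and aQ: "\<forall>p\<in>Q. inner a p \<ge> b"
    using separating_hyperplane_sets[OF cA cQ nA nQ dj] by blast
  obtain a1 a2 where a12: "a = (a1, a2)" by (cases a)
  have q1: "a1 * ((m - \<eta>) + s) + a2 * (m - \<eta>) \<ge> b" if "s \<ge> 0" for s
    using aQ[rule_format, of "((m - \<eta>) + s, m - \<eta>)"] that unfolding Q_def a12 by (simp add: inner_Pair)
  have q2: "a2 * ((m - \<eta>) + s) + a1 * (m - \<eta>) \<ge> b" if "s \<ge> 0" for s
    using aQ[rule_format, of "(m - \<eta>, (m - \<eta>) + s)"] that unfolding Q_def a12 by (simp add: inner_Pair algebra_simps)
  have p1: "a1 \<ge> 0" by (rule coef_nonneg[OF q1])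
  have p2: "a2 \<ge> 0" by (rule coef_nonneg[OF q2])
  have pos: "a1 + a2 > 0" using a p1 p2 a12 by (auto simp: zero_prod_def)
  define t where "t = a1 / (a1 + a2)"
  have t01: "0 \<le> t" "t \<le> 1" using p1 p2 pos unfolding t_def by auto
  obtain x where x: "x \<in> C" "t * h x + (1 - t) * g x \<ge> m - \<eta>/2"
    using H[OF t01, of "\<eta>/2"] assms(5) by auto
  have "a1 * h x + a2 * g x \<le> b" using aA x(1) unfolding A_def a12 by (auto simp: inner_Pair)
  also have "b \<le> a1 * (m - \<eta>) + a2 * (m - \<eta>)"
    using q1[of 0] by simp
  finally have le: "a1 * h x + a2 * g x \<le> (a1 + a2) * (m - \<eta>)" by (simp add: algebra_simps)
  have eq: "a1 * h x + a2 * g x = (a1 + a2) * (t * h x + (1 - t) * g x)"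
  proof -
    have e1: "(a1 + a2) * t = a1" using pos unfolding t_def by simp
    have e2: "(a1 + a2) * (1 - t) = a2" using pos unfolding t_def by (simp add: field_simps)
    have "(a1 + a2) * (t * h x + (1 - t) * g x) = ((a1 + a2) * t) * h x + ((a1 + a2) * (1 - t)) * g x"
      by (simp add: algebra_simps)
    then show ?thesis using e1 e2 by simp
  qed
  have "(a1 + a2) * (m - \<eta>/2) \<le> (a1 + a2) * (t * h x + (1 - t) * g x)"
    using x(2) pos by (intro mult_left_mono) auto
  with le eq have "(a1 + a2) * (m - \<eta>/2) \<le> (a1 + a2) * (m - \<eta>)" by linarith
  with pos assms(5) show False by (simp add: mult_le_cancel_left)
qed

lemma fin_minimax:
  fixes C :: "'a::real_vector set" and g :: "nat \<Rightarrow> 'a \<Rightarrow> real" and m \<eta> :: real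
  assumes "finite F"
  shows "convex C \<Longrightarrow> C \<noteq> {} \<Longrightarrow> (\<forall>k\<in>F. linear (g k)) \<Longrightarrow>
    (\<forall>l e. (\<forall>k\<in>F. l k \<ge> 0) \<and> sum l F = 1 \<and> e > 0 \<longrightarrow> (\<exists>x\<in>C. (\<Sum>k\<in>F. l k * g k x) \<ge> m - e))
    \<Longrightarrow> \<eta> > 0 \<Longrightarrow> \<exists>x\<in>C. \<forall>k\<in>F. g k x \<ge> m - \<eta>"
  using assms
proof (induction F arbitrary: C m \<eta> rule: finite_induct)
  case empty
  then show ?case by auto
next
  case (insert a F C m \<eta>)
  note H = insert.prems(4)
  have lina: "linear (g a)" using insert.prems(3) by auto
  have linF: "\<forall>k\<in>F. linear (g k)" using insert.prems(3) by auto
  define C' where "C' = C \<inter> (g a -` {m - \<eta>/2..})"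
  have cC': "convex C'" unfolding C'_def
    by (intro convex_Int insert.prems(1) convex_linear_vimage lina) (simp add: convex_real_interval)
  have z: "(\<Sum>k\<in>F. (if k = a then 1 else 0) * g k x) = 0" for x
    using insert.hyps by (intro sum.neutral) auto
  have sm: "sum (\<lambda>k. if k = a then 1 else (0::real)) F = 0"
    using insert.hyps by (intro sum.neutral) auto
  have pre: "(\<forall>k\<in>insert a F. 0 \<le> (\<lambda>k. if k = a then 1 else (0::real)) k) \<and>
      sum (\<lambda>k. if k = a then 1 else (0::real)) (insert a F) = 1 \<and> \<eta>/2 > 0"
    using insert.hyps sm insert.prems(5) by simp
  obtain x0 where "x0 \<in> C" "(\<Sum>k\<in>insert a F. (if k = a then 1 else 0) * g k x0) \<ge> m - \<eta>/2"
    using H[rule_format, OF pre] by blast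
  hence "x0 \<in> C" "g a x0 \<ge> m - \<eta>/2" using insert.hyps z by auto
  hence neC': "C' \<noteq> {}" unfolding C'_def by auto
  have H': "\<forall>(l::nat\<Rightarrow>real) (e::real). (\<forall>k\<in>F. l k \<ge> 0) \<and> sum l F = 1 \<and> e > 0 \<longrightarrow> (\<exists>x\<in>C'. (\<Sum>k\<in>F. l k * g k x) \<ge> (m - \<eta>/2) - e)"
  proof (intro allI impI)
    fix l :: "nat \<Rightarrow> real" and e :: real
    assume l: "(\<forall>k\<in>F. l k \<ge> 0) \<and> sum l F = 1 \<and> e > 0"
    have linh: "linear (\<lambda>x. \<Sum>k\<in>F. l k * g k x)"
      using linF by (intro linearI) (simp_all add: linear_add linear_scale sum.distrib sum_distrib_left algebra_simps)
    have "\<exists>x\<in>C. (\<Sum>k\<in>F. l k * g k x) \<ge> m - \<eta>/2 \<and> g a x \<ge> m - \<eta>/2"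
    proof (rule two_minimax[OF insert.prems(1) linh lina])
      fix t e' :: real assume t: "0 \<le> t" "t \<le> 1" "0 < e'"
      define mu where "mu = (\<lambda>k. if k = a then 1 - t else t * l k)"
      have sF: "(\<Sum>k\<in>F. mu k * g k x) = t * (\<Sum>k\<in>F. l k * g k x)" for x
        unfolding mu_def using insert.hyps by (auto simp: sum_distrib_left algebra_simps intro!: sum.cong)
      have sF1: "(\<Sum>k\<in>F. mu k) = t * (\<Sum>k\<in>F. l k)"
        unfolding mu_def using insert.hyps by (auto simp: sum_distrib_left intro!: sum.cong)
      have "(\<forall>k\<in>insert a F. mu k \<ge> 0) \<and> sum mu (insert a F) = 1 \<and> e' > 0"
        using l t insert.hyps sF1 by (auto simp: mu_def)
      then obtain x where x: "x \<in> C" "(\<Sum>k\<in>insert a F. mu k * g k x) \<ge> m - e'"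
        using H by blast
      have "(\<Sum>k\<in>insert a F. mu k * g k x) = t * (\<Sum>k\<in>F. l k * g k x) + (1 - t) * g a x"
        using insert.hyps sF[of x] by (simp add: mu_def)
      then show "\<exists>x\<in>C. t * (\<Sum>k\<in>F. l k * g k x) + (1 - t) * g a x \<ge> m - e'"
        using x by auto
    next
      show "\<eta>/2 > 0" using insert.prems(5) by simp
    qed
    then show "\<exists>x\<in>C'. (\<Sum>k\<in>F. l k * g k x) \<ge> (m - \<eta>/2) - e"
      using l unfolding C'_def by force
  qed
  obtain x where x: "x \<in> C'" "\<forall>k\<in>F. g k x \<ge> (m - \<eta>/2) - \<eta>/2"
    using insert.IH[OF cC' neC' linF H'] insert.prems(5) by (meson half_gt_zero)
  have "g a x \<ge> m - \<eta>" using x(1) insert.prems(5) unfolding C'_def by auto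
  then show ?case using x unfolding C'_def by auto
qed

lemma norming:
  fixes G :: "'a::real_normed_vector \<Rightarrow>\<^sub>L real" and \<eta> :: real
  assumes "\<eta> > 0"
  shows "\<exists>x. norm x \<le> 1 \<and> blinfun_apply G x > norm G - \<eta>"
proof (rule ccontr)
  assume N: "\<not> ?thesis"
  hence N': "\<And>x. norm x \<le> 1 \<Longrightarrow> blinfun_apply G x \<le> norm G - \<eta>" by force
  have c0: "0 \<le> norm G - \<eta>" using N'[of 0] by simp
  have "norm (blinfun_apply G x) \<le> (norm G - \<eta>) * norm x" for x
  proof (cases "x = 0")
    case True then show ?thesis by simp
  next
    case False
    define u where "u = x /\<^sub>R norm x"
    have nu: "norm u \<le> 1" "norm (-u) \<le> 1" using False unfolding u_def by auto
    have "blinfun_apply G u \<le> norm G - \<eta>" "blinfun_apply G (-u) \<le> norm G - \<eta>"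
      using N' nu by auto
    hence a: "\<bar>blinfun_apply G u\<bar> \<le> norm G - \<eta>" by (simp add: blinfun.minus_right)
    have "blinfun_apply G x = norm x * blinfun_apply G u"
      using False unfolding u_def by (simp add: blinfun.scaleR_right)
    hence "\<bar>blinfun_apply G x\<bar> = norm x * \<bar>blinfun_apply G u\<bar>" by (simp add: abs_mult)
    also have "\<dots> \<le> norm x * (norm G - \<eta>)" using a by (simp add: mult_left_mono)
    finally show ?thesis by (simp add: mult.commute)
  qed
  hence "norm G \<le> norm G - \<eta>" by (intro norm_blinfun_bound c0)
  with assms show False by simp
qed

lemma core:
  fixes xs :: "nat \<Rightarrow> ('a::real_normed_vector \<Rightarrow>\<^sub>L real)"
  assumes "\<not> weakly_null xs"
  shows "\<exists>(r::nat \<Rightarrow> nat) \<delta>::real. strict_mono r \<and> \<delta> > 0 \<and>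
    (\<forall>F::nat set. finite F \<longrightarrow> (\<exists>x. norm x \<le> 1 \<and> (\<forall>k\<in>F. \<bar>blinfun_apply (xs (r k)) x\<bar> \<ge> \<delta>)))"
proof -
  obtain \<phi> :: "('a \<Rightarrow>\<^sub>L real) \<Rightarrow>\<^sub>L real" where nt: "\<not> (\<lambda>n. blinfun_apply \<phi> (xs n)) \<longlonglongrightarrow> 0"
    using assms unfolding weakly_null_def by blast
  then obtain \<epsilon> :: real where ep: "\<epsilon> > 0" and fr: "\<forall>N. \<exists>n\<ge>N. \<bar>blinfun_apply \<phi> (xs n)\<bar> \<ge> \<epsilon>"
    unfolding LIMSEQ_iff by (auto simp: not_less)
  have infS: "infinite {n. \<bar>blinfun_apply \<phi> (xs n)\<bar> \<ge> \<epsilon>}"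
    using fr by (simp add: infinite_nat_iff_unbounded_le)
  have "{n. \<bar>blinfun_apply \<phi> (xs n)\<bar> \<ge> \<epsilon>} = {n. 1 * blinfun_apply \<phi> (xs n) \<ge> \<epsilon>} \<union> {n. (-1) * blinfun_apply \<phi> (xs n) \<ge> \<epsilon>}"
    by auto
  then obtain s :: real where s: "\<bar>s\<bar> = 1" "infinite {n. s * blinfun_apply \<phi> (xs n) \<ge> \<epsilon>}"
    using infS by (metis abs_1 abs_minus_cancel finite_UnI)
  then obtain r :: "nat \<Rightarrow> nat" where r: "strict_mono r" "\<And>k. s * blinfun_apply \<phi> (xs (r k)) \<ge> \<epsilon>"
    using infinite_enumerate by blast
  define B where "B = norm \<phi> + 1"
  have B: "B > 0" unfolding B_def by (simp add: add_nonneg_pos)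
  define m where "m = \<epsilon> / B"
  have m: "m > 0" unfolding m_def using B ep by simp
  define g where "g = (\<lambda>k. blinfun_apply (s *\<^sub>R xs (r k)))"
  have gs: "g k x = s * blinfun_apply (xs (r k)) x" for k x unfolding g_def by (simp add: blinfun.scaleR_left)
  have P: "\<exists>x. norm x \<le> 1 \<and> (\<forall>k\<in>F. \<bar>blinfun_apply (xs (r k)) x\<bar> \<ge> m/2)" if F: "finite F" for F
  proof -
    have lin: "\<forall>k\<in>F. linear (g k)" unfolding g_def
      by (auto intro: bounded_linear.linear blinfun.bounded_linear_right)
    have H: "\<forall>l e. (\<forall>k\<in>F. l k \<ge> 0) \<and> sum l F = 1 \<and> e > 0 \<longrightarrow>
        (\<exists>x\<in>cball 0 1. (\<Sum>k\<in>F. l k * g k x) \<ge> m - e)"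
    proof (intro allI impI)
      fix l :: "nat \<Rightarrow> real" and e :: real
      assume l: "(\<forall>k\<in>F. l k \<ge> 0) \<and> sum l F = 1 \<and> e > 0"
      define G where "G = (\<Sum>k\<in>F. (l k * s) *\<^sub>R xs (r k))"
      have Gx: "blinfun_apply G x = (\<Sum>k\<in>F. l k * g k x)" for x
        unfolding G_def gs by (simp add: blinfun.sum_left blinfun.scaleR_left mult.assoc)
      have "blinfun_apply \<phi> G = (\<Sum>k\<in>F. l k * (s * blinfun_apply \<phi> (xs (r k))))"
        unfolding G_def by (simp add: blinfun.sum_right blinfun.scaleR_right mult.assoc)
      also have "\<dots> \<ge> (\<Sum>k\<in>F. l k * \<epsilon>)"
        using l r(2) by (intro sum_mono mult_left_mono) auto
      also have "(\<Sum>k\<in>F. l k * \<epsilon>) = \<epsilon>" using l by (simp add: sum_distrib_right[symmetric])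
      finally have pG: "blinfun_apply \<phi> G \<ge> \<epsilon>" .
      have "blinfun_apply \<phi> G \<le> norm \<phi> * norm G"
        using norm_blinfun[of \<phi> G] by simp
      also have "\<dots> \<le> B * norm G" unfolding B_def by (simp add: mult_right_mono)
      finally have "\<epsilon> \<le> B * norm G" using pG by linarith
      hence nG: "m \<le> norm G" unfolding m_def using B by (simp add: divide_le_eq mult.commute)
      obtain x where "norm x \<le> 1" "blinfun_apply G x > norm G - e" using norming l by blast
      then show "\<exists>x\<in>cball 0 1. (\<Sum>k\<in>F. l k * g k x) \<ge> m - e"
        using nG Gx by (intro bexI[of _ x]) auto
    qed
    obtain x where x: "x \<in> cball 0 1" "\<forall>k\<in>F. g k x \<ge> m - m/2"
      using fin_minimax[OF F convex_cball _ lin H, where \<eta>="m/2"] m by auto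
    have "\<forall>k\<in>F. \<bar>blinfun_apply (xs (r k)) x\<bar> \<ge> m/2"
    proof
      fix k assume "k \<in> F"
      hence "s * blinfun_apply (xs (r k)) x \<ge> m/2" using x(2) gs by auto
      moreover have "\<bar>s * blinfun_apply (xs (r k)) x\<bar> = \<bar>blinfun_apply (xs (r k)) x\<bar>"
        using s(1) by (simp add: abs_mult)
      ultimately show "\<bar>blinfun_apply (xs (r k)) x\<bar> \<ge> m/2" by linarith
    qed
    then show ?thesis using x(1) by auto
  qed
  show ?thesis using r(1) m P by (intro exI[of _ r] exI[of _ "m/2"]) auto
qed

theorem lemma4p1:
  fixes xs :: "nat \<Rightarrow> ('a::banach \<Rightarrow>\<^sub>L real)"
    and ys :: "nat \<Rightarrow> ('e::banach_lattice \<Rightarrow>\<^sub>L real)"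
  shows "(\<not> weakly_null xs \<longrightarrow>
            (\<exists>(r::nat \<Rightarrow> nat) \<delta>::real. strict_mono r \<and> \<delta> > 0 \<and>
               (\<forall>F::nat set. finite F \<longrightarrow>
                  (\<exists>x. norm x = 1 \<and> (\<forall>k\<in>F. \<bar>blinfun_apply (xs (r k)) x\<bar> \<ge> \<delta>)))))
       \<and> ((\<not> weakly_null ys \<and> (\<forall>n. positive_functional (ys n))) \<longrightarrow>
            (\<exists>(r::nat \<Rightarrow> nat) \<delta>::real. strict_mono r \<and> \<delta> > 0 \<and>
               (\<forall>F::nat set. finite F \<longrightarrow>
                  (\<exists>x. norm x = 1 \<and> 0 \<le> x \<and>
                       (\<forall>k\<in>F. \<bar>blinfun_apply (ys (r k)) x\<bar> \<ge> \<delta>)))))"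
proof (intro conjI impI)
  assume nw: "\<not> weakly_null xs"
  obtain r and \<delta> :: real where rr: "strict_mono r \<and> \<delta> > 0 \<and>
    (\<forall>F::nat set. finite F \<longrightarrow> (\<exists>x. norm x \<le> 1 \<and> (\<forall>k\<in>F. \<bar>blinfun_apply (xs (r k)) x\<bar> \<ge> \<delta>)))"
    using core[OF nw] by blast
  have r: "strict_mono r" "\<delta> > 0" using rr by auto
  have P: "\<And>F. finite F \<Longrightarrow> \<exists>x. norm x \<le> 1 \<and> (\<forall>k\<in>F. \<bar>blinfun_apply (xs (r k)) x\<bar> \<ge> \<delta>)"
    using rr by blast
  have "\<exists>x. norm x = 1 \<and> (\<forall>k\<in>F. \<bar>blinfun_apply (xs (r k)) x\<bar> \<ge> \<delta>)" if F: "finite F" for F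
  proof -
    obtain x where x: "norm x \<le> 1" "\<forall>k\<in>insert 0 F. \<bar>blinfun_apply (xs (r k)) x\<bar> \<ge> \<delta>"
      using P[of "insert 0 F"] F by auto
    have "x \<noteq> 0"
    proof
      assume "x = 0"
      hence "\<bar>blinfun_apply (xs (r 0)) x\<bar> = 0" by simp
      with x(2) r(2) show False by simp
    qed
    hence nx: "norm x > 0" by simp
    have "\<bar>blinfun_apply (xs (r k)) (x /\<^sub>R norm x)\<bar> \<ge> \<delta>" if k: "k \<in> F" for k
    proof -
      have "\<bar>blinfun_apply (xs (r k)) (x /\<^sub>R norm x)\<bar> = \<bar>blinfun_apply (xs (r k)) x\<bar> / norm x"
        using nx by (simp add: blinfun.scaleR_right abs_mult divide_inverse mult.commute)
      also have "\<dots> \<ge> \<bar>blinfun_apply (xs (r k)) x\<bar>"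
        using nx x(1) by (simp add: le_divide_eq mult_left_le)
      finally show ?thesis using x(2) k by auto
    qed
    then show ?thesis using nx by (intro exI[of _ "x /\<^sub>R norm x"]) auto
  qed
  then show "\<exists>(r::nat \<Rightarrow> nat) \<delta>::real. strict_mono r \<and> \<delta> > 0 \<and>
               (\<forall>F::nat set. finite F \<longrightarrow>
                  (\<exists>x. norm x = 1 \<and> (\<forall>k\<in>F. \<bar>blinfun_apply (xs (r k)) x\<bar> \<ge> \<delta>)))"
    using r by (intro exI[of _ r] exI[of _ \<delta>]) simp
next
  assume A: "\<not> weakly_null ys \<and> (\<forall>n. positive_functional (ys n))"
  obtain r and \<delta> :: real where rr: "strict_mono r \<and> \<delta> > 0 \<and>
    (\<forall>F::nat set. finite F \<longrightarrow> (\<exists>x. norm x \<le> 1 \<and> (\<forall>k\<in>F. \<bar>blinfun_apply (ys (r k)) x\<bar> \<ge> \<delta>)))"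
    using core[of ys] A by blast
  have r: "strict_mono r" "\<delta> > 0" using rr by auto
  have P: "\<And>F. finite F \<Longrightarrow> \<exists>x. norm x \<le> 1 \<and> (\<forall>k\<in>F. \<bar>blinfun_apply (ys (r k)) x\<bar> \<ge> \<delta>)"
    using rr by blast
  have pos: "\<And>n z. 0 \<le> z \<Longrightarrow> 0 \<le> blinfun_apply (ys n) z"
    using A unfolding positive_functional_def by blast
  have "\<exists>x. norm x = 1 \<and> 0 \<le> x \<and> (\<forall>k\<in>F. \<bar>blinfun_apply (ys (r k)) x\<bar> \<ge> \<delta>)" if F: "finite F" for F
  proof -
    obtain x where x: "norm x \<le> 1" "\<forall>k\<in>insert 0 F. \<bar>blinfun_apply (ys (r k)) x\<bar> \<ge> \<delta>"
      using P[of "insert 0 F"] F by auto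
    define a where "a = sup x (- x)"
    have xa: "x \<le> a" "- x \<le> a" unfolding a_def by auto
    have "0 \<le> a + a" using add_mono[OF xa] by simp
    hence "0 \<le> (1/2::real) *\<^sub>R (a + a)" by (intro scaleR_nonneg_nonneg) auto
    moreover have "(1/2::real) *\<^sub>R (a + a) = a"
      by (simp only: scaleR_2[symmetric] scaleR_scaleR) simp
    ultimately have a0: "0 \<le> a" by simp
    have "- a \<le> 0" using a0 by (simp only: neg_le_0_iff_le)
    hence "- a \<le> a" using a0 by (rule order_trans)
    hence "sup a (- a) \<le> a" by (intro le_supI) auto
    hence "sup a (- a) \<le> sup x (- x)" unfolding a_def[symmetric] .
    hence na: "norm a \<le> norm x" by (rule lattice_norm)
    have ya: "blinfun_apply (ys n) a \<ge> \<bar>blinfun_apply (ys n) x\<bar>" for n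
    proof -
      have "0 \<le> blinfun_apply (ys n) (a - x)" using xa by (intro pos) simp
      moreover have "0 \<le> blinfun_apply (ys n) (a + x)"
      proof (intro pos)
        have "0 \<le> a - (- x)" using xa(2) by (simp only: diff_ge_0_iff_ge)
        thus "0 \<le> a + x" by simp
      qed
      ultimately show ?thesis by (simp add: blinfun.diff_right blinfun.add_right)
    qed
    have "a \<noteq> 0"
    proof
      assume "a = 0"
      hence "\<bar>blinfun_apply (ys (r 0)) x\<bar> \<le> 0" using ya[of "r 0"] by simp
      moreover have "\<bar>blinfun_apply (ys (r 0)) x\<bar> \<ge> \<delta>" using x(2) by simp
      ultimately show False using r(2) by linarith
    qed
    hence nx: "norm a > 0" by simp
    have na1: "norm a \<le> 1" using na x(1) by simp
    have "\<bar>blinfun_apply (ys (r k)) (a /\<^sub>R norm a)\<bar> \<ge> \<delta>" if k: "k \<in> F" for k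
    proof -
      have "\<bar>blinfun_apply (ys (r k)) (a /\<^sub>R norm a)\<bar> = \<bar>blinfun_apply (ys (r k)) a\<bar> / norm a"
        using nx by (simp add: blinfun.scaleR_right abs_mult divide_inverse mult.commute)
      also have "\<dots> \<ge> \<bar>blinfun_apply (ys (r k)) a\<bar>"
        using nx na1 by (simp add: le_divide_eq mult_left_le)
      finally show ?thesis using x(2) k ya[of "r k"] by auto
    qed
    moreover have "0 \<le> a /\<^sub>R norm a" using a0 nx by (intro scaleR_nonneg_nonneg) auto
    ultimately show ?thesis using nx by (intro exI[of _ "a /\<^sub>R norm a"]) auto
  qed
  then show "\<exists>(r::nat \<Rightarrow> nat) \<delta>::real. strict_mono r \<and> \<delta> > 0 \<and>
               (\<forall>F::nat set. finite F \<longrightarrow>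
                  (\<exists>x. norm x = 1 \<and> 0 \<le> x \<and>
                       (\<forall>k\<in>F. \<bar>blinfun_apply (ys (r k)) x\<bar> \<ge> \<delta>)))"
    using r by (intro exI[of _ r] exI[of _ \<delta>]) simp
qed

end
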